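(* Let $H$ be a finite field, $\mathbb{F}$ an extension of $H$ of degree $m$, $n=|\mathbb{F}|$, $d<n$, $\delta=1-d/n\ge3/4$, and $0<\rho\le\delta/8$. Let $f\colon\mathbb{F}^m\to\mathbb{F}$ and $x\in\mathbb{F}^m$ with $f(x)\neq0$, and let $R\ge1$. Run the $R$-step $H$-plane-line random walk from $x$, and fix $h_0,h'_0$ (hence $P_0$) such that $\mathrm{dist}_{\{(0,0)\}}(f|_{P_0},\mathrm{RM}_{\mathbb{F}}(2,d))<\rho$. For $i\in[R]$ let $F_i$ be the event that $N(\ell_i)\ge2\rho n$ and $N(P_i)\ge(\delta-2\rho)n^2$, let $E_i$ be the event that $N(\ell_i)\ge2\rho n$ and $N(P_i)<(\delta-2\rho)n^2$, and let $\epsilon_i=\Pr[F_1\wedge\dots\wedge F_{i-1}\wedge E_i]$. Then, with all probabilities taken over the remaining randomness of the walk (with $P_0$ fixed), \[ \Pr[F_1\wedge\dots\wedge F_R]\ge\Big(1-\frac4n\Big)^R-\sum_{i=1}^R\epsilon_i. \]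
   Context: $\mathrm{RM}_{\mathbb{F}}(2,d)$ is the set of evaluation tables $\mathbb{F}^2\to\mathbb{F}$ of bivariate polynomials of total degree at most $d$. For $a,h,h'\in\mathbb{F}^m$, the plane $P=(a,h,h')$ has restriction $f|_P\colon\mathbb{F}^2\to\mathbb{F}$, $(t,s)\mapsto f(a+th+sh')$, and $N(P)=|\{(t,s)\in\mathbb{F}^2: f|_P(t,s)\ne0\}|$. For a line $\ell=\{b+tu:t\in\mathbb{F}\}$ (given by $b,u$), $N(\ell)=|\{t\in\mathbb{F}:f(b+tu)\ne0\}|$. Weighted distance: for strings $u,v$ indexed by $I$ with $|I|=N$ and $\emptyset\ne A\subseteq I$, $\mathrm{dist}_A(u,v)=\frac{|\{i\in A:u_i\ne v_i\}|}{2|A|}+\frac{|\{i\in I:u_i\ne v_i\}|}{2N}$, $\mathrm{dist}_A(u,S)=\min_{v\in S}\mathrm{dist}_A(u,v)$. The $R$-step $H$-plane-line random walk from $x$: set $x_0=x$, choose $h_0,h_0'\in H^m$ uniformly, $P_0=(x_0,h_0,h_0')$. For $i=1,\dots,R$: choose $s_{i-1},s'_{i-1},t_{i-1},t'_{i-1}\in\mathbb{F}$ uniformly, set $x_i=x_{i-1}+s_{i-1}h_{i-1}+s'_{i-1}h'_{i-1}$, $h_i=t_{i-1}h_{i-1}+t'_{i-1}h'_{i-1}$, the line $\ell_i=\{x_i+th_i:t\in\mathbb{F}\}$, choose $h'_i\in H^m$ uniformly, and set $P_i=(x_i,h_i,h'_i)$. All random choices are independent. *)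

theory Defs
  imports "HOL-Probability.Probability"
begin

definition is_subfield :: "'f::field set \<Rightarrow> bool" where
  "is_subfield H \<longleftrightarrow> 0 \<in> H \<and> 1 \<in> H \<and>
     (\<forall>a\<in>H. \<forall>b\<in>H. a + b \<in> H \<and> a * b \<in> H) \<and>
     (\<forall>a\<in>H. - a \<in> H) \<and> (\<forall>a\<in>H. a \<noteq> 0 \<longrightarrow> inverse a \<in> H)"

definition ext_degree :: "'f::field set \<Rightarrow> nat \<Rightarrow> bool" where
  "ext_degree H m \<longleftrightarrow> (\<exists>b :: nat \<Rightarrow> 'f.
     bij_betw (\<lambda>c. \<Sum>i<m. c i * b i) ({..<m} \<rightarrow>\<^sub>E H) UNIV)"

text \<open>Points of F^m are functions 'm \<Rightarrow> 'f with CARD('m) = m. H^m:\<close>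
definition Hvecs :: "'f set \<Rightarrow> ('m \<Rightarrow> 'f) set" where
  "Hvecs H = {h. \<forall>j. h j \<in> H}"

definition RM2 :: "nat \<Rightarrow> ('f::field \<times> 'f \<Rightarrow> 'f) set" where
  "RM2 d = {g. \<exists>c :: nat \<Rightarrow> nat \<Rightarrow> 'f. \<forall>t s.
      g (t, s) = (\<Sum>i\<le>d. \<Sum>j\<le>d - i. c i j * t ^ i * s ^ j)}"

definition distA :: "'i::finite set \<Rightarrow> ('i \<Rightarrow> 'b) \<Rightarrow> ('i \<Rightarrow> 'b) \<Rightarrow> real" where
  "distA A u v = real (card {i\<in>A. u i \<noteq> v i}) / (2 * real (card A))
               + real (card {i. u i \<noteq> v i}) / (2 * real CARD('i))"

definition distA_set :: "'i::finite set \<Rightarrow> ('i \<Rightarrow> 'b) \<Rightarrow> ('i \<Rightarrow> 'b) set \<Rightarrow> real" where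
  "distA_set A u S = Min (distA A u ` S)"

definition restr_plane :: "(('m \<Rightarrow> 'f::field) \<Rightarrow> 'f) \<Rightarrow> ('m \<Rightarrow> 'f) \<Rightarrow> ('m \<Rightarrow> 'f) \<Rightarrow> ('m \<Rightarrow> 'f)
      \<Rightarrow> ('f \<times> 'f \<Rightarrow> 'f)" where
  "restr_plane f a h h' = (\<lambda>(t, s). f (\<lambda>j. a j + t * h j + s * h' j))"

definition Nplane :: "(('m \<Rightarrow> 'f::{finite,field}) \<Rightarrow> 'f) \<Rightarrow> ('m \<Rightarrow> 'f) \<Rightarrow> ('m \<Rightarrow> 'f) \<Rightarrow> ('m \<Rightarrow> 'f) \<Rightarrow> nat" where
  "Nplane f a h h' = card {p :: 'f \<times> 'f. restr_plane f a h h' p \<noteq> 0}"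

definition Nline :: "(('m \<Rightarrow> 'f::{finite,field}) \<Rightarrow> 'f) \<Rightarrow> ('m \<Rightarrow> 'f) \<Rightarrow> ('m \<Rightarrow> 'f) \<Rightarrow> nat" where
  "Nline f b u = card {t :: 'f. f (\<lambda>j. b j + t * u j) \<noteq> 0}"

text \<open>The plane-line walk. \<omega> i = (s_i, s'_i, t_i, t'_i, h'_{i+1}) is the randomness of step i+1.
  walk x h0 h0' \<omega> i = (x_i, h_i, h'_i); the line is \<ell>_i = (x_i, h_i) and the plane P_i = (x_i,h_i,h'_i).\<close>
fun walk :: "('m \<Rightarrow> 'f::field) \<Rightarrow> ('m \<Rightarrow> 'f) \<Rightarrow> ('m \<Rightarrow> 'f)
      \<Rightarrow> (nat \<Rightarrow> 'f \<times> 'f \<times> 'f \<times> 'f \<times> ('m \<Rightarrow> 'f)) \<Rightarrow> nat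
      \<Rightarrow> ('m \<Rightarrow> 'f) \<times> ('m \<Rightarrow> 'f) \<times> ('m \<Rightarrow> 'f)" where
  "walk x h0 h0' \<omega> 0 = (x, h0, h0')"
| "walk x h0 h0' \<omega> (Suc i) =
     (case walk x h0 h0' \<omega> i of (xi, hi, hi') \<Rightarrow>
       (case \<omega> i of (s, s', t, t', g) \<Rightarrow>
         ((\<lambda>j. xi j + s * hi j + s' * hi' j), (\<lambda>j. t * hi j + t' * hi' j), g)))"

definition walk_space :: "'f::{finite,field} set \<Rightarrow> nat
      \<Rightarrow> (nat \<Rightarrow> 'f \<times> 'f \<times> 'f \<times> 'f \<times> ('m::finite \<Rightarrow> 'f)) set" where
  "walk_space H R = {..<R} \<rightarrow>\<^sub>E (UNIV \<times> UNIV \<times> UNIV \<times> UNIV \<times> Hvecs H)"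

definition walk_prob :: "'f::{finite,field} set \<Rightarrow> nat
      \<Rightarrow> ((nat \<Rightarrow> 'f \<times> 'f \<times> 'f \<times> 'f \<times> ('m::finite \<Rightarrow> 'f)) \<Rightarrow> bool) \<Rightarrow> real" where
  "walk_prob H R E = measure_pmf.prob (pmf_of_set (walk_space H R)) {\<omega>. E \<omega>}"

definition eventF :: "(('m \<Rightarrow> 'f::{finite,field}) \<Rightarrow> 'f) \<Rightarrow> real \<Rightarrow> real \<Rightarrow> ('m \<Rightarrow> 'f)
      \<Rightarrow> ('m \<Rightarrow> 'f) \<Rightarrow> ('m \<Rightarrow> 'f) \<Rightarrow> (nat \<Rightarrow> 'f \<times> 'f \<times> 'f \<times> 'f \<times> ('m \<Rightarrow> 'f)) \<Rightarrow> nat \<Rightarrow> bool" where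
  "eventF f \<delta> \<rho> x h0 h0' \<omega> i = (case walk x h0 h0' \<omega> i of (xi, hi, hi') \<Rightarrow>
      real (Nline f xi hi) \<ge> 2 * \<rho> * real CARD('f) \<and>
      real (Nplane f xi hi hi') \<ge> (\<delta> - 2 * \<rho>) * real CARD('f) ^ 2)"

definition eventE :: "(('m \<Rightarrow> 'f::{finite,field}) \<Rightarrow> 'f) \<Rightarrow> real \<Rightarrow> real \<Rightarrow> ('m \<Rightarrow> 'f)
      \<Rightarrow> ('m \<Rightarrow> 'f) \<Rightarrow> ('m \<Rightarrow> 'f) \<Rightarrow> (nat \<Rightarrow> 'f \<times> 'f \<times> 'f \<times> 'f \<times> ('m \<Rightarrow> 'f)) \<Rightarrow> nat \<Rightarrow> bool" where
  "eventE f \<delta> \<rho> x h0 h0' \<omega> i = (case walk x h0 h0' \<omega> i of (xi, hi, hi') \<Rightarrow>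
      real (Nline f xi hi) \<ge> 2 * \<rho> * real CARD('f) \<and>
      real (Nplane f xi hi hi') < (\<delta> - 2 * \<rho>) * real CARD('f) ^ 2)"

end

theory Submission
  imports Defs "HOL-Computational_Algebra.Polynomial"
begin


definition pl :: "'f::field \<times> 'f \<Rightarrow> 'f \<Rightarrow> 'f \<times> 'f \<Rightarrow> 'f \<times> 'f" where
  "pl p \<tau> u = (fst p + \<tau> * fst u, snd p + \<tau> * snd u)"

definition acnt :: "('f::{finite,field} \<times> 'f \<Rightarrow> bool) \<Rightarrow> ('f \<times> 'f) \<times> ('f \<times> 'f) \<Rightarrow> real" where
  "acnt Z q = (\<Sum>\<tau>\<in>UNIV. of_bool (Z (pl (fst q) \<tau> (snd q))))"

lemma card_as_sum: "real (card {x\<in>A. P x}) = (\<Sum>x\<in>A. of_bool (P x))" if "finite A"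
  using that by (simp add: sum.If_cases Int_def)

lemma acnt_card: "acnt Z q = real (card {\<tau>. Z (pl (fst q) \<tau> (snd q))})"
  unfolding acnt_def using card_as_sum[of UNIV "\<lambda>\<tau>. Z (pl (fst q) \<tau> (snd q))"] by simp

lemma sum_transl:
  fixes g :: "'f::{finite,field} \<times> 'f \<Rightarrow> real"
  shows "(\<Sum>p\<in>UNIV. g (pl p \<tau> u)) = (\<Sum>p\<in>UNIV. g p)"
  by (rule sum.reindex_bij_witness[where i="\<lambda>p. pl p (-\<tau>) u" and j="\<lambda>p. pl p \<tau> u"])
     (auto simp: pl_def)

lemma sum_pair:
  fixes g :: "('f::{finite,field} \<times> 'f) \<times> ('f \<times> 'f) \<Rightarrow> real"
  shows "(\<Sum>q\<in>UNIV. g q) = (\<Sum>u\<in>UNIV. \<Sum>p\<in>UNIV. g (p, u))"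
proof -
  have "(\<Sum>q\<in>UNIV. g q) = (\<Sum>q\<in>UNIV \<times> UNIV. g q)" by simp
  also have "\<dots> = (\<Sum>p\<in>UNIV. \<Sum>u\<in>UNIV. g (p, u))" by (simp add: sum.cartesian_product)
  also have "\<dots> = (\<Sum>u\<in>UNIV. \<Sum>p\<in>UNIV. g (p, u))" by (rule sum.swap)
  finally show ?thesis .
qed

lemma S1:
  fixes Z :: "'f::{finite,field} \<times> 'f \<Rightarrow> bool"
  shows "(\<Sum>q\<in>UNIV. acnt Z q) = real CARD('f) ^ 3 * (\<Sum>p\<in>UNIV. of_bool (Z p))"
proof -
  have "(\<Sum>q\<in>UNIV. acnt Z q) = (\<Sum>\<tau>\<in>UNIV. \<Sum>q\<in>UNIV. of_bool (Z (pl (fst q) \<tau> (snd q))))"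
    unfolding acnt_def by (rule sum.swap)
  also have "\<dots> = (\<Sum>\<tau>\<in>(UNIV::'f set). \<Sum>u\<in>(UNIV::('f\<times>'f) set). \<Sum>p\<in>UNIV. of_bool (Z p))"
    by (subst sum_pair) (simp add: sum_transl[of "\<lambda>p. of_bool (Z p)"])
  also have "\<dots> = real CARD('f) ^ 3 * (\<Sum>p\<in>UNIV. of_bool (Z p))"
    by (simp add: power3_eq_cube)
  finally show ?thesis .
qed

lemma sum_single:
  fixes Z :: "'f::{finite,field} \<times> 'f \<Rightarrow> bool"
  shows "(\<Sum>q\<in>UNIV. of_bool (Z (pl (fst q) \<tau> (snd q))) :: real) = real CARD('f) ^ 2 * (\<Sum>p\<in>UNIV. of_bool (Z p))"
  by (subst sum_pair) (simp add: sum_transl[of "\<lambda>p. of_bool (Z p)"] power2_eq_square)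

lemma aux1: fixes a c \<tau> \<tau>' :: "'f::field" shows "\<tau>' - \<tau> \<noteq> 0 \<Longrightarrow> (a + \<tau>'*c - (a + \<tau>*c)) / (\<tau>'-\<tau>) = c"
proof -
  assume h: "\<tau>' - \<tau> \<noteq> 0"
  have "a + \<tau>'*c - (a + \<tau>*c) = (\<tau>'-\<tau>)*c" by (simp add: algebra_simps)
  thus ?thesis using h by simp
qed

lemma aux2: fixes y w \<tau> \<tau>' :: "'f::field" shows "\<tau>' - \<tau> \<noteq> 0 \<Longrightarrow> y - \<tau>*((w-y)/(\<tau>'-\<tau>)) + \<tau>'*((w-y)/(\<tau>'-\<tau>)) = w"
proof -
  assume h: "\<tau>' - \<tau> \<noteq> 0"
  define u where "u = (w-y)/(\<tau>'-\<tau>)"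
  have e: "u*(\<tau>'-\<tau>) = w-y" using h unfolding u_def by simp
  have "y - \<tau>*u + \<tau>'*u = y + u*(\<tau>'-\<tau>)" by (simp add: algebra_simps)
  also have "\<dots> = w" by (simp add: e)
  finally show ?thesis unfolding u_def .
qed

lemma aux3: fixes y u \<tau> :: "'f::field" shows "y - \<tau>*u + \<tau>*u = y" by simp

lemma sum_double:
  fixes Z :: "'f::{finite,field} \<times> 'f \<Rightarrow> bool"
  assumes "\<tau> \<noteq> \<tau>'"
  shows "(\<Sum>q\<in>UNIV. of_bool (Z (pl (fst q) \<tau> (snd q))) * of_bool (Z (pl (fst q) \<tau>' (snd q))) :: real)
     = (\<Sum>p\<in>UNIV. of_bool (Z p)) * (\<Sum>p\<in>UNIV. of_bool (Z p))"
proof -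
  have ne: "\<tau>' - \<tau> \<noteq> 0" using assms by simp
  have "(\<Sum>q\<in>UNIV. of_bool (Z (pl (fst q) \<tau> (snd q))) * of_bool (Z (pl (fst q) \<tau>' (snd q))) :: real)
     = (\<Sum>yw\<in>UNIV. of_bool (Z (fst yw)) * of_bool (Z (snd yw)))"
  proof (rule sum.reindex_bij_witness[where j="\<lambda>q. (pl (fst q) \<tau> (snd q), pl (fst q) \<tau>' (snd q))"
        and i="\<lambda>yw. (let u = ((fst (snd yw) - fst (fst yw)) / (\<tau>' - \<tau>), (snd (snd yw) - snd (fst yw)) / (\<tau>' - \<tau>))
                      in ((fst (fst yw) - \<tau> * fst u, snd (fst yw) - \<tau> * snd u), u))"])
    fix q :: "('f \<times> 'f) \<times> ('f \<times> 'f)"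
    obtain a b c e where q: "q = ((a,b),(c,e))" by (metis prod.exhaust)
    show "(let u = ((fst (snd (pl (fst q) \<tau> (snd q), pl (fst q) \<tau>' (snd q))) - fst (fst (pl (fst q) \<tau> (snd q), pl (fst q) \<tau>' (snd q)))) / (\<tau>' - \<tau>),
                  (snd (snd (pl (fst q) \<tau> (snd q), pl (fst q) \<tau>' (snd q))) - snd (fst (pl (fst q) \<tau> (snd q), pl (fst q) \<tau>' (snd q)))) / (\<tau>' - \<tau>))
            in ((fst (fst (pl (fst q) \<tau> (snd q), pl (fst q) \<tau>' (snd q))) - \<tau> * fst u, snd (fst (pl (fst q) \<tau> (snd q), pl (fst q) \<tau>' (snd q))) - \<tau> * snd u), u)) = q"
      using ne unfolding q pl_def Let_def by (simp only: fst_conv snd_conv aux1[OF ne] add_diff_cancel)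
  next
    fix yw :: "('f \<times> 'f) \<times> ('f \<times> 'f)"
    obtain a b c e where q: "yw = ((a,b),(c,e))" by (metis prod.exhaust)
    show "(\<lambda>q. (pl (fst q) \<tau> (snd q), pl (fst q) \<tau>' (snd q)))
         (let u = ((fst (snd yw) - fst (fst yw)) / (\<tau>' - \<tau>), (snd (snd yw) - snd (fst yw)) / (\<tau>' - \<tau>))
          in ((fst (fst yw) - \<tau> * fst u, snd (fst yw) - \<tau> * snd u), u)) = yw"
      using ne unfolding q pl_def Let_def by (simp only: fst_conv snd_conv aux2[OF ne] diff_add_cancel)
  qed auto
  also have "\<dots> = (\<Sum>p\<in>UNIV. of_bool (Z p)) * (\<Sum>p\<in>UNIV. of_bool (Z p))"
    by (subst sum_pair) (simp add: sum_product)
  finally show ?thesis .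
qed

lemma sum_if_eq:
  fixes A B :: real
  shows "(\<Sum>\<tau>'\<in>(UNIV::'f::finite set). if \<tau> = \<tau>' then A else B) = A + (real CARD('f) - 1) * B"
proof -
  have "(\<Sum>\<tau>'\<in>(UNIV::'f set). if \<tau> = \<tau>' then A else B) = (if \<tau> = \<tau> then A else B) + (\<Sum>\<tau>'\<in>UNIV - {\<tau>}. if \<tau> = \<tau>' then A else B)"
    by (rule sum.remove) auto
  also have "\<dots> = A + (\<Sum>\<tau>'\<in>UNIV - {\<tau>}. B)" by (intro arg_cong2[where f="(+)"] sum.cong) auto
  also have "\<dots> = A + (real CARD('f) - 1) * B" by (simp add: card_Diff_singleton)
  finally show ?thesis .
qed

lemma S2:
  fixes Z :: "'f::{finite,field} \<times> 'f \<Rightarrow> bool"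
  defines "M \<equiv> (\<Sum>p\<in>UNIV. of_bool (Z p)) :: real"
  shows "(\<Sum>q\<in>UNIV. acnt Z q ^ 2) = real CARD('f) ^ 3 * M + real CARD('f) * (real CARD('f) - 1) * M * M"
proof -
  have "(\<Sum>q\<in>UNIV. acnt Z q ^ 2) = (\<Sum>q\<in>UNIV. \<Sum>\<tau>\<in>UNIV. \<Sum>\<tau>'\<in>UNIV.
          of_bool (Z (pl (fst q) \<tau> (snd q))) * of_bool (Z (pl (fst q) \<tau>' (snd q))) :: real)"
    by (rule sum.cong[OF refl]) (simp only: acnt_def power2_eq_square sum_product)
  also have "\<dots> = (\<Sum>\<tau>\<in>UNIV. \<Sum>\<tau>'\<in>UNIV. \<Sum>q\<in>UNIV.
          of_bool (Z (pl (fst q) \<tau> (snd q))) * of_bool (Z (pl (fst q) \<tau>' (snd q))) :: real)"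
    by (subst sum.swap, subst (2) sum.swap, rule refl)
  also have "\<dots> = (\<Sum>\<tau>\<in>(UNIV::'f set). \<Sum>\<tau>'\<in>(UNIV::'f set). if \<tau> = \<tau>' then real CARD('f) ^ 2 * M else M * M)"
  proof (intro sum.cong refl)
    fix \<tau> \<tau>' :: 'f
    show "(\<Sum>q\<in>UNIV. of_bool (Z (pl (fst q) \<tau> (snd q))) * of_bool (Z (pl (fst q) \<tau>' (snd q))) :: real)
       = (if \<tau> = \<tau>' then real CARD('f) ^ 2 * M else M * M)"
    proof (cases "\<tau> = \<tau>'")
      case True
      then show ?thesis unfolding M_def using sum_single[of Z \<tau>] by simp
    next
      case False
      then show ?thesis unfolding M_def using sum_double[of \<tau> \<tau>' Z] by simp
    qed
  qed
  also have "\<dots> = real CARD('f) * (real CARD('f) ^ 2 * M + (real CARD('f) - 1) * (M * M))"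
    by (simp add: sum_if_eq)
  also have "\<dots> = real CARD('f) ^ 3 * M + real CARD('f) * (real CARD('f) - 1) * M * M"
    by (simp add: algebra_simps power2_eq_square power3_eq_cube)
  finally show ?thesis .
qed

lemma VAR:
  fixes Z :: "'f::{finite,field} \<times> 'f \<Rightarrow> bool"
  defines "M \<equiv> (\<Sum>p\<in>UNIV. of_bool (Z p)) :: real" and "n \<equiv> real CARD('f)"
  shows "(\<Sum>q\<in>UNIV. (acnt Z q - M / n) ^ 2) = n * M * (n^2 - M)"
proof -
  have n0: "n > 0" unfolding n_def by simp
  have cU: "real (card (UNIV :: (('f \<times> 'f) \<times> ('f \<times> 'f)) set)) = n ^ 4"
    unfolding n_def by (simp add: power4_eq_xxxx)
  have "(\<Sum>q\<in>UNIV. (acnt Z q - M / n) ^ 2) = (\<Sum>q\<in>UNIV. acnt Z q ^ 2) - 2 * (M/n) * (\<Sum>q\<in>UNIV. acnt Z q)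
         + real (card (UNIV :: (('f \<times> 'f) \<times> ('f \<times> 'f)) set)) * (M/n)^2"
    by (simp add: power2_diff sum.distrib sum_subtractf sum_distrib_left sum_distrib_right sum_divide_distrib algebra_simps)
  also have "\<dots> = n^3 * M + n * (n - 1) * M * M - 2 * (M/n) * (n^3 * M) + n^4 * (M/n)^2"
    using S1[of Z] S2[of Z] cU unfolding M_def n_def by simp
  also have "\<dots> = n * M * (n^2 - M)"
    using n0 by (simp add: field_simps power2_eq_square power3_eq_cube power4_eq_xxxx)
  finally show ?thesis .
qed

lemma CHEB:
  fixes Z :: "'f::{finite,field} \<times> 'f \<Rightarrow> bool" and \<delta> \<rho> :: real
  assumes M: "real (card {p. Z p}) \<ge> (\<delta> - 2*\<rho>) * real CARD('f) ^ 2"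
    and "\<delta> \<ge> 3/4" "0 < \<rho>" "\<rho> \<le> \<delta>/8"
  shows "real (card {q. acnt Z q < 2*\<rho>*real CARD('f)}) \<le> 16 / (9 * real CARD('f)) * real CARD('f) ^ 4"
proof -
  define n where "n = real CARD('f)"
  define M where "M = (\<Sum>p\<in>UNIV. of_bool (Z p) :: real)"
  have n0: "n > 0" unfolding n_def by simp
  have MM: "M = real (card {p. Z p})" unfolding M_def using card_as_sum[of UNIV Z] by simp
  have M0: "M \<ge> 0" unfolding MM by simp
  define D where "D = M/n - 2*\<rho>*n"
  have "M/n \<ge> (\<delta> - 2*\<rho>) * n" using M n0 unfolding MM n_def[symmetric] by (simp add: field_simps power2_eq_square)
  moreover have "3/8 * n \<le> (\<delta> - 4*\<rho>) * n" using assms(2-4) n0 by (intro mult_right_mono) auto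
  ultimately have D1: "D \<ge> 3*n/8" unfolding D_def by (simp add: algebra_simps)
  hence D0: "D > 0" using n0 by simp
  define B where "B = {q. acnt Z q < 2*\<rho>*n}"
  have "real (card B) * D^2 = (\<Sum>q\<in>B. D^2)" by simp
  also have "\<dots> \<le> (\<Sum>q\<in>B. (acnt Z q - M/n)^2)"
  proof (rule sum_mono)
    fix q assume "q \<in> B"
    hence "M/n - acnt Z q \<ge> D" unfolding B_def D_def by simp
    hence "D^2 \<le> (M/n - acnt Z q)^2" using D0 by (intro power_mono) auto
    thus "D^2 \<le> (acnt Z q - M/n)^2" by (simp add: power2_commute)
  qed
  also have "\<dots> \<le> (\<Sum>q\<in>UNIV. (acnt Z q - M/n)^2)" by (rule sum_mono2) auto
  also have "\<dots> = n * M * (n^2 - M)" unfolding M_def n_def by (rule VAR)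
  also have "\<dots> \<le> n * (n^4/4)"
  proof -
    have "M * (n^2 - M) \<le> n^4/4" using sum_squares_ge_zero[of "n^2 - 2*M" 0]
      by (simp add: power2_eq_square power4_eq_xxxx algebra_simps)
    thus ?thesis using n0 by (metis mult_left_mono less_imp_le mult.assoc)
  qed
  finally have c: "real (card B) * D^2 \<le> n * (n^4/4)" .
  have "(3*n/8)^2 \<le> D^2" using D1 n0 by (intro power_mono) auto
  hence "real (card B) * (3*n/8)^2 \<le> n * (n^4/4)" using c by (smt (verit) mult_left_mono of_nat_0_le_iff)
  hence "real (card B) \<le> n * (n^4/4) / (3*n/8)^2" using n0 by (simp add: field_simps)
  also have "\<dots> = 16 / (9 * n) * n^4" using n0 by (simp add: field_simps power2_eq_square power4_eq_xxxx)
  finally show ?thesis unfolding B_def n_def .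
qed




lemma card_pair_sum:
  fixes P :: "'a::finite \<times> 'b::finite \<Rightarrow> bool"
  shows "card {p. P p} = (\<Sum>b\<in>UNIV. card {a. P (a, b)})"
proof -
  have "{p. P p} = (\<Union>b\<in>UNIV. (\<lambda>a. (a,b)) ` {a. P (a, b)})" by auto
  hence "card {p. P p} = (\<Sum>b\<in>UNIV. card ((\<lambda>a. (a,b)) ` {a. P (a, b)}))"
    by (simp, subst card_UN_disjoint) (auto)
  also have "\<dots> = (\<Sum>b\<in>UNIV. card {a. P (a, b)})"
    by (intro sum.cong refl card_image) (auto simp: inj_on_def)
  finally show ?thesis .
qed

definition Qp :: "(nat \<Rightarrow> nat \<Rightarrow> 'f::field) \<Rightarrow> nat \<Rightarrow> nat \<Rightarrow> 'f poly" where
  "Qp c d i = (\<Sum>j\<le>d - i. monom (c i j) j)"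

lemma coeff_Qp: "coeff (Qp c d i) j = (if j \<le> d - i then c i j else 0)"
  unfolding Qp_def by (simp add: coeff_sum)

lemma poly_Qp: "poly (Qp c d i) s = (\<Sum>j\<le>d - i. c i j * s ^ j)"
  unfolding Qp_def by (simp add: poly_sum poly_monom)

lemma degree_Qp: "degree (Qp c d i) \<le> d - i"
  unfolding Qp_def by (intro degree_sum_le) (auto intro: order.trans[OF degree_monom_le])

lemma SZ:
  fixes c :: "nat \<Rightarrow> nat \<Rightarrow> 'f::{finite,field}"
  assumes c0: "c 0 0 \<noteq> 0"
  shows "card {p::'f\<times>'f. (\<Sum>i\<le>d. \<Sum>j\<le>d - i. c i j * fst p ^ i * snd p ^ j) = 0} \<le> d * CARD('f)"
proof -
  define Q where "Q = Qp c d"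
  define K where "K = {i. i \<le> d \<and> Q i \<noteq> 0}"
  have "coeff (Q 0) 0 \<noteq> 0" unfolding Q_def coeff_Qp using c0 by simp
  hence "0 \<in> K" unfolding K_def by auto
  have fK: "finite K" unfolding K_def by auto
  define k where "k = Max K"
  have kK: "k \<in> K" unfolding k_def using fK \<open>0 \<in> K\<close> by (intro Max_in) auto
  hence kd: "k \<le> d" and Qk: "Q k \<noteq> 0" unfolding K_def by auto
  have Qz: "Q i = 0" if "k < i" "i \<le> d" for i
    using that Max_ge[OF fK, of i] unfolding k_def K_def by (metis (mono_tags, lifting) mem_Collect_eq not_le)
  have geq: "(\<Sum>i\<le>d. \<Sum>j\<le>d - i. c i j * t ^ i * s ^ j) = (\<Sum>i\<le>k. poly (Q i) s * t ^ i)" for t s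
  proof -
    have "(\<Sum>i\<le>d. \<Sum>j\<le>d - i. c i j * t ^ i * s ^ j) = (\<Sum>i\<le>d. poly (Q i) s * t ^ i)"
      unfolding Q_def poly_Qp by (simp add: sum_distrib_right sum_distrib_left algebra_simps)
    also have "\<dots> = (\<Sum>i\<le>k. poly (Q i) s * t ^ i)"
      by (rule sum.mono_neutral_right) (use kd Qz in auto)
    finally show ?thesis .
  qed
  define Ps where "Ps s = (\<Sum>i\<le>k. monom (poly (Q i) s) i)" for s
  have poly_Ps: "poly (Ps s) t = (\<Sum>i\<le>k. poly (Q i) s * t ^ i)" for s t
    unfolding Ps_def by (simp add: poly_sum poly_monom)
  have each: "card {t. poly (Ps s) t = 0} \<le> (if poly (Q k) s = 0 then CARD('f) else k)" for s
  proof (cases "poly (Q k) s = 0")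
    case True
    then show ?thesis by (simp add: card_mono)
  next
    case False
    have "coeff (Ps s) k = poly (Q k) s" unfolding Ps_def by (simp add: coeff_sum)
    hence ne: "Ps s \<noteq> 0" using False by auto
    have "degree (Ps s) \<le> k" unfolding Ps_def
      by (intro degree_sum_le) (auto intro: order.trans[OF degree_monom_le])
    then show ?thesis using card_poly_roots_bound[OF ne] False by simp
  qed
  have "card {p::'f\<times>'f. (\<Sum>i\<le>d. \<Sum>j\<le>d - i. c i j * fst p ^ i * snd p ^ j) = 0}
        = (\<Sum>s\<in>UNIV. card {t. poly (Ps s) t = 0})"
    by (subst card_pair_sum) (simp add: geq poly_Ps)
  also have "\<dots> \<le> (\<Sum>s\<in>UNIV. k + (if poly (Q k) s = 0 then CARD('f) else 0))"
    by (intro sum_mono order.trans[OF each]) auto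
  also have "\<dots> = CARD('f) * k + CARD('f) * card {s. poly (Q k) s = 0}"
    by (simp add: sum.distrib sum.If_cases Int_def)
  also have "\<dots> \<le> CARD('f) * k + CARD('f) * (d - k)"
    using card_poly_roots_bound[OF Qk] degree_Qp[of c d k] unfolding Q_def by simp
  also have "\<dots> = d * CARD('f)" using kd by (simp add: algebra_simps)
  finally show ?thesis .
qed




lemma P0:
  fixes f :: "('m::finite \<Rightarrow> 'f::{finite,field}) \<Rightarrow> 'f" and \<rho> \<delta> :: real
  assumes dist: "distA_set {(0, 0)} (restr_plane f x h0 h0') (RM2 d) < \<rho>"
    and r8: "\<rho> \<le> 1/8" and fx: "f x \<noteq> 0"
    and dl: "\<delta> = 1 - real d / real CARD('f)"
  shows "real (Nplane f x h0 h0') \<ge> (\<delta> - 2*\<rho>) * real CARD('f) ^ 2"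
proof -
  define u where "u = restr_plane f x h0 h0'"
  define n where "n = real CARD('f)"
  have n0: "n > 0" unfolding n_def by simp
  have fin: "finite (RM2 d :: ('f \<times> 'f \<Rightarrow> 'f) set)" by simp
  have "(\<lambda>_. 0) \<in> (RM2 d :: ('f \<times> 'f \<Rightarrow> 'f) set)" unfolding RM2_def
    by (rule CollectI, rule exI[of _ "\<lambda>_ _. 0"]) simp
  hence ne: "(RM2 d :: ('f \<times> 'f \<Rightarrow> 'f) set) \<noteq> {}" by auto
  from dist have "Min (distA {(0,0)} u ` RM2 d) < \<rho>" unfolding distA_set_def u_def .
  then obtain g where gR: "g \<in> RM2 d" and gd: "distA {(0,0)} u g < \<rho>"
    using fin ne by (subst (asm) Min_less_iff) auto
  have cardP: "CARD('f \<times> 'f) = CARD('f) * CARD('f)" by simp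
  have u00: "u (0,0) = f x" unfolding u_def restr_plane_def by simp
  have eq00: "u (0,0) = g (0,0)"
  proof (rule ccontr)
    assume "u (0,0) \<noteq> g (0,0)"
    hence "{i\<in>{(0::'f,0::'f)}. u i \<noteq> g i} = {(0,0)}" by auto
    hence "distA {(0,0)} u g \<ge> 1/2" unfolding distA_def by simp
    thus False using gd r8 by simp
  qed
  from gR obtain c where gc: "\<And>t s. g (t, s) = (\<Sum>i\<le>d. \<Sum>j\<le>d - i. c i j * t ^ i * s ^ j)"
    unfolding RM2_def by auto
  have z: "\<And>i j. c i j * (0::'f) ^ i * 0 ^ j = (if j = 0 then (if i = 0 then c 0 0 else 0) else 0)"
    by (simp add: power_0_left)
  have "g (0,0) = (\<Sum>i\<le>d. if i = 0 then c 0 0 else 0)" unfolding gc z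
    by (intro sum.cong refl) (simp add: sum.delta)
  also have "\<dots> = c 0 0" by (simp add: sum.delta)
  finally have "g (0,0) = c 0 0" .
  hence c0: "c 0 0 \<noteq> 0" using eq00 u00 fx by simp
  have "{p. g p = 0} = {p::'f\<times>'f. (\<Sum>i\<le>d. \<Sum>j\<le>d - i. c i j * fst p ^ i * snd p ^ j) = 0}"
    using gc by (metis prod.collapse)
  hence gz: "card {p. g p = 0} \<le> d * CARD('f)" using SZ[of c d, OF c0] by simp
  have "card {p. g p \<noteq> 0} + card {p. g p = 0} = CARD('f \<times> 'f)"
  proof -
    have "{p. g p \<noteq> 0} \<union> {p. g p = 0} = UNIV" by auto
    thus ?thesis by (subst card_Un_disjoint[symmetric]) auto
  qed
  hence cnt: "card {p. g p \<noteq> 0} + card {p. g p = 0} = CARD('f \<times> 'f)" .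
  have g1: "real (card {p. g p \<noteq> 0}) \<ge> n^2 - real d * n"
  proof -
    have "real (card {p. g p \<noteq> 0}) + real (card {p. g p = 0}) = n * n"
      using cnt unfolding n_def cardP
      by (metis of_nat_add of_nat_mult)
    moreover have "real (card {p. g p = 0}) \<le> real d * n" using gz unfolding n_def
      by (metis of_nat_le_iff of_nat_mult)
    ultimately show ?thesis by (simp add: power2_eq_square)
  qed
  have "distA {(0,0)} u g \<ge> real (card {i. u i \<noteq> g i}) / (2 * n^2)"
    unfolding distA_def n_def cardP by (simp add: power2_eq_square)
  hence "real (card {i. u i \<noteq> g i}) / (2 * n^2) < \<rho>" using gd by simp
  hence g2: "real (card {i. u i \<noteq> g i}) < 2 * \<rho> * n^2" using n0 by (simp add: field_simps)
  have "{p. g p \<noteq> 0} \<subseteq> {p. u p \<noteq> 0} \<union> {i. u i \<noteq> g i}" by auto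
  hence "card {p. g p \<noteq> 0} \<le> card ({p. u p \<noteq> 0} \<union> {i. u i \<noteq> g i})" by (intro card_mono) auto
  also have "\<dots> \<le> card {p. u p \<noteq> 0} + card {i. u i \<noteq> g i}" by (rule card_Un_le)
  finally have "real (card {p. g p \<noteq> 0}) \<le> real (card {p. u p \<noteq> 0}) + real (card {i. u i \<noteq> g i})"
    by linarith
  hence "real (card {p. u p \<noteq> 0}) \<ge> n^2 - real d * n - 2 * \<rho> * n^2" using g1 g2 by linarith
  moreover have "(\<delta> - 2*\<rho>) * n^2 = n^2 - real d * n - 2 * \<rho> * n^2"
    unfolding dl n_def using n0 by (simp add: field_simps power2_eq_square n_def)
  ultimately show ?thesis unfolding Nplane_def u_def n_def by simp
qed




lemma m_one:
  assumes "is_subfield (H :: 'f::{finite,field} set)" and "ext_degree H CARD('m::finite)"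
    and "CARD('f) = 2"
  shows "CARD('m) = 1"
proof -
  from assms(2) obtain b :: "nat \<Rightarrow> 'f" where
    bij: "bij_betw (\<lambda>c. \<Sum>i<CARD('m). c i * b i) ({..<CARD('m)} \<rightarrow>\<^sub>E H) UNIV"
    unfolding ext_degree_def by blast
  have "card ({..<CARD('m)} \<rightarrow>\<^sub>E H) = CARD('f)" using bij_betw_same_card[OF bij] by simp
  hence c1: "card H ^ CARD('m) = 2" using assms(3) by (simp add: card_funcsetE)
  have "{0,1} \<subseteq> H" using assms(1) unfolding is_subfield_def by auto
  hence "card {0::'f,1} \<le> card H" by (intro card_mono) auto
  hence "card H \<ge> 2" by simp
  moreover have "card H \<le> 2" using card_mono[of UNIV H] assms(3) by simp
  ultimately have "card H = 2" by simp
  with c1 have "(2::nat) ^ CARD('m) = 2 ^ 1" by simp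
  thus ?thesis using power_inject_exp[of "2::nat" "CARD('m)" 1] by simp
qed

lemma N2:
  fixes f :: "('m::finite \<Rightarrow> 'f::{finite,field}) \<Rightarrow> 'f"
  assumes m1: "CARD('m) = 1" and n2: "CARD('f) = 2"
    and big: "card {p. restr_plane f a h h' p \<noteq> 0} \<ge> 3"
  shows "restr_plane f a h h' p \<noteq> 0"
proof (rule ccontr)
  assume z: "\<not> restr_plane f a h h' p \<noteq> 0"
  obtain j0 :: 'm where j0: "\<And>j. j = j0" using m1 by (metis card_1_singletonE UNIV_I singletonD)
  obtain t s where p: "p = (t, s)" by fastforce
  define p1 where "p1 = (if h j0 = 0 \<and> h' j0 = 0 then (t + 1, s) else (t + h' j0, s - h j0))"
  have neq: "p1 \<noteq> p" unfolding p1_def p by auto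
  have "restr_plane f a h h' p1 = restr_plane f a h h' p"
  proof -
    have "(\<lambda>j. a j + fst p1 * h j + snd p1 * h' j) = (\<lambda>j. a j + t * h j + s * h' j)"
    proof
      fix j show "a j + fst p1 * h j + snd p1 * h' j = a j + t * h j + s * h' j"
        using j0[of j] unfolding p1_def by (auto simp: algebra_simps)
    qed
    thus ?thesis unfolding restr_plane_def p by (simp add: case_prod_beta)
  qed
  hence z1: "\<not> restr_plane f a h h' p1 \<noteq> 0" using z by simp
  have "{p. restr_plane f a h h' p \<noteq> 0} \<subseteq> UNIV - {p, p1}" using z z1 by auto
  hence "card {p. restr_plane f a h h' p \<noteq> 0} \<le> card (UNIV - {p, p1})" by (intro card_mono) auto
  also have "\<dots> = 2" using neq n2 by (simp add: card_Diff_subset)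
  finally show False using big by simp
qed

definition qf :: "nat \<Rightarrow> real" where "qf N = (if N = 2 then 0 else 16 / (9 * real N))"

lemma LINE:
  fixes f :: "('m::finite \<Rightarrow> 'f::{finite,field}) \<Rightarrow> 'f" and \<delta> \<rho> :: real
  assumes big: "real (Nplane f xi hi hi') \<ge> (\<delta> - 2*\<rho>) * real CARD('f) ^ 2"
    and d34: "\<delta> \<ge> 3/4" and r0: "0 < \<rho>" and r8: "\<rho> \<le> \<delta>/8"
    and two: "CARD('f) = 2 \<Longrightarrow> CARD('m) = 1 \<and> \<delta> = 1"
  shows "real (card {q::('f\<times>'f)\<times>('f\<times>'f). real (Nline f (\<lambda>k. xi k + fst (fst q) * hi k + snd (fst q) * hi' k)
            (\<lambda>k. fst (snd q) * hi k + snd (snd q) * hi' k)) < 2*\<rho>*real CARD('f)})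
         \<le> qf CARD('f) * real CARD('f) ^ 4"
proof -
  define Z where "Z p = (restr_plane f xi hi hi' p \<noteq> 0)" for p
  have eqN: "real (Nline f (\<lambda>k. xi k + fst (fst q) * hi k + snd (fst q) * hi' k)
            (\<lambda>k. fst (snd q) * hi k + snd (snd q) * hi' k)) = acnt Z q" for q
  proof -
    have "{\<tau>. Z (pl (fst q) \<tau> (snd q))} = {\<tau>. f (\<lambda>k. xi k + fst (fst q) * hi k + snd (fst q) * hi' k
            + \<tau> * (fst (snd q) * hi k + snd (snd q) * hi' k)) \<noteq> 0}"
    proof -
      have "\<And>\<tau>. (\<lambda>j. xi j + (fst (fst q) + \<tau> * fst (snd q)) * hi j + (snd (fst q) + \<tau> * snd (snd q)) * hi' j)
          = (\<lambda>k. xi k + fst (fst q) * hi k + snd (fst q) * hi' k + \<tau> * (fst (snd q) * hi k + snd (snd q) * hi' k))"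
        by (rule ext) (simp add: algebra_simps)
      thus ?thesis unfolding Z_def restr_plane_def pl_def by simp
    qed
    thus ?thesis unfolding acnt_card Nline_def by simp
  qed
  have NZ: "Nplane f xi hi hi' = card {p. Z p}" unfolding Nplane_def Z_def ..
  show ?thesis
  proof (cases "CARD('f) = 2")
    case False
    thus ?thesis unfolding eqN qf_def using CHEB[of \<delta> \<rho> Z] big d34 r0 r8 NZ by simp
  next
    case True
    with two have m1: "CARD('m) = 1" and d1: "\<delta> = 1" by auto
    have "real (Nplane f xi hi hi') \<ge> 3" using big d1 r8 True by simp
    hence c3: "card {p. restr_plane f xi hi hi' p \<noteq> 0} \<ge> 3" unfolding Nplane_def by simp
    have allZ: "Z p" for p unfolding Z_def using N2[OF m1 True c3] .
    have "acnt Z q \<ge> 1" for q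
    proof -
      have "{0} \<subseteq> {\<tau>. Z (pl (fst q) \<tau> (snd q))}" using allZ by auto
      hence "card {0::'f} \<le> card {\<tau>. Z (pl (fst q) \<tau> (snd q))}" by (intro card_mono) auto
      thus ?thesis unfolding acnt_card by simp
    qed
    moreover have "2*\<rho>*real CARD('f) \<le> 1" using True r8 d1 by simp
    ultimately have "{q. acnt Z q < 2*\<rho>*real CARD('f)} = {}" by (smt (verit) empty_Collect_eq)
    thus ?thesis unfolding eqN qf_def using True by simp
  qed
qed




lemma upd_PiE: "w \<in> {..<R} \<rightarrow>\<^sub>E S \<Longrightarrow> j < R \<Longrightarrow> v \<in> S \<Longrightarrow> w(j := v) \<in> {..<R} \<rightarrow>\<^sub>E S"
  using PiE_fun_upd[of v "\<lambda>_. S" j w "{..<R}"] by (simp add: insert_absorb)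

lemma DECOMP:
  fixes S :: "'a set" and P :: "(nat \<Rightarrow> 'a) \<Rightarrow> bool"
  assumes fS: "finite S" and jR: "j < R"
  shows "card {w \<in> {..<R} \<rightarrow>\<^sub>E S. P w} =
     (\<Sum>w'\<in>(\<lambda>w. w(j := undefined)) ` ({..<R} \<rightarrow>\<^sub>E S). card {v\<in>S. P (w'(j := v))})"
proof -
  define Om where "Om = {..<R} \<rightarrow>\<^sub>E S"
  define Om' where "Om' = (\<lambda>w. w(j := undefined)) ` Om"
  have fO: "finite Om" unfolding Om_def using fS by (simp add: finite_PiE)
  have eq: "{w \<in> Om. P w} = (\<Union>w'\<in>Om'. (\<lambda>v. w'(j := v)) ` {v\<in>S. P (w'(j := v))})"
  proof (intro equalityI subsetI)
    fix w assume "w \<in> {w \<in> Om. P w}"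
    hence o: "w \<in> Om" "P w" by auto
    have "w j \<in> S" using o jR unfolding Om_def by auto
    moreover have "(w(j := undefined))(j := w j) = w" by simp
    moreover have "w(j := undefined) \<in> Om'" unfolding Om'_def using o(1) by (rule imageI)
    ultimately show "w \<in> (\<Union>w'\<in>Om'. (\<lambda>v. w'(j := v)) ` {v\<in>S. P (w'(j := v))})"
      using o by (intro UN_I[of "w(j := undefined)"]) (auto intro!: image_eqI[of _ _ "w j"])
  next
    fix w assume "w \<in> (\<Union>w'\<in>Om'. (\<lambda>v. w'(j := v)) ` {v\<in>S. P (w'(j := v))})"
    then obtain w0 v where o0: "w0 \<in> Om" and v: "v \<in> S" "P ((w0(j := undefined))(j := v))"
      and w: "w = (w0(j := undefined))(j := v)" unfolding Om'_def by auto
    have "w = w0(j := v)" using w by simp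
    thus "w \<in> {w \<in> Om. P w}" using upd_PiE[of w0 R S j v] o0 v jR w unfolding Om_def by auto
  qed
  have "card {w \<in> Om. P w} = (\<Sum>w'\<in>Om'. card ((\<lambda>v. w'(j := v)) ` {v\<in>S. P (w'(j := v))}))"
    unfolding eq
  proof (rule card_UN_disjoint)
    show "finite Om'" unfolding Om'_def using fO by simp
    show "\<forall>i\<in>Om'. finite ((\<lambda>v. i(j := v)) ` {v \<in> S. P (i(j := v))})" using fS by auto
    show "\<forall>i\<in>Om'. \<forall>k\<in>Om'. i \<noteq> k \<longrightarrow>
        (\<lambda>v. i(j := v)) ` {v \<in> S. P (i(j := v))} \<inter> (\<lambda>v. k(j := v)) ` {v \<in> S. P (k(j := v))} = {}"
    proof (intro ballI impI)
      fix i k assume "i \<in> Om'" "k \<in> Om'" "i \<noteq> k"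
      hence ij: "i j = undefined" "k j = undefined" unfolding Om'_def by auto
      show "(\<lambda>v. i(j := v)) ` {v \<in> S. P (i(j := v))} \<inter> (\<lambda>v. k(j := v)) ` {v \<in> S. P (k(j := v))} = {}"
      proof (rule ccontr)
        assume "\<not> ?thesis"
        then obtain v1 v2 where "i(j := v1) = k(j := v2)" by auto
        hence "(i(j := v1))(j := undefined) = (k(j := v2))(j := undefined)" by simp
        hence "i = k" using ij by (metis fun_upd_triv fun_upd_upd)
        thus False using \<open>i \<noteq> k\<close> by simp
      qed
    qed
  qed
  also have "\<dots> = (\<Sum>w'\<in>Om'. card {v\<in>S. P (w'(j := v))})"
    by (intro sum.cong refl card_image) (auto simp: inj_on_def dest: fun_cong[where x=j])
  finally show ?thesis unfolding Om_def Om'_def .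
qed

lemma COUNT:
  fixes S :: "'a set" and A B :: "(nat \<Rightarrow> 'a) \<Rightarrow> bool" and c :: real
  assumes fS: "finite S" and jR: "j < R"
    and Aloc: "\<And>w v. w \<in> {..<R} \<rightarrow>\<^sub>E S \<Longrightarrow> v \<in> S \<Longrightarrow> A (w(j := v)) = A w"
    and Bbd: "\<And>w. w \<in> {..<R} \<rightarrow>\<^sub>E S \<Longrightarrow> A w \<Longrightarrow> real (card {v\<in>S. B (w(j := v))}) \<le> c * real (card S)"
  shows "real (card {w \<in> {..<R} \<rightarrow>\<^sub>E S. A w \<and> B w}) \<le> c * real (card {w \<in> {..<R} \<rightarrow>\<^sub>E S. A w})"
proof (cases "S = {}")
  case True
  have "{..<R} \<rightarrow>\<^sub>E S = {}" using True jR by (auto simp: PiE_eq_empty_iff)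
  thus ?thesis by simp
next
  case False
  then obtain s0 where s0: "s0 \<in> S" by auto
  define Om' where "Om' = (\<lambda>w. w(j := undefined)) ` ({..<R} \<rightarrow>\<^sub>E S)"
  have key: "real (card {v\<in>S. A (w(j := v)) \<and> B (w(j := v))}) \<le> c * real (card {v\<in>S. A (w(j := v))})"
    if w: "w \<in> Om'" for w
  proof -
    define w0 where "w0 = w(j := s0)"
    obtain u where o: "u \<in> {..<R} \<rightarrow>\<^sub>E S" and wo: "w = u(j := undefined)" using w unfolding Om'_def by auto
    have w0O: "w0 \<in> {..<R} \<rightarrow>\<^sub>E S" unfolding w0_def wo using upd_PiE[OF o jR s0] by simp
    have upd: "w(j := v) = w0(j := v)" for v unfolding w0_def by simp
    have Aeq: "A (w(j := v)) = A w0" if "v \<in> S" for v unfolding upd using Aloc[OF w0O that] .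
    show ?thesis
    proof (cases "A w0")
      case True
      have "{v\<in>S. A (w(j := v)) \<and> B (w(j := v))} = {v\<in>S. B (w0(j := v))}" using Aeq True upd by auto
      moreover have "{v\<in>S. A (w(j := v))} = S" using Aeq True by auto
      ultimately show ?thesis using Bbd[OF w0O True] by simp
    next
      case False
      hence "{v\<in>S. A (w(j := v)) \<and> B (w(j := v))} = {}" "{v\<in>S. A (w(j := v))} = {}" using Aeq by auto
      thus ?thesis by (simp only: card.empty of_nat_0 mult_zero_right order.refl)
    qed
  qed
  have "real (card {w \<in> {..<R} \<rightarrow>\<^sub>E S. A w \<and> B w}) = (\<Sum>w\<in>Om'. real (card {v\<in>S. A (w(j := v)) \<and> B (w(j := v))}))"
    unfolding Om'_def DECOMP[OF fS jR] by simp
  also have "\<dots> \<le> (\<Sum>w\<in>Om'. c * real (card {v\<in>S. A (w(j := v))}))" by (rule sum_mono) (rule key)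
  also have "\<dots> = c * real (card {w \<in> {..<R} \<rightarrow>\<^sub>E S. A w})"
    unfolding Om'_def DECOMP[OF fS jR] by (simp add: sum_distrib_left)
  finally show ?thesis .
qed




lemma walk_loc: "(\<And>l. l < k \<Longrightarrow> w l = w' l) \<Longrightarrow> walk x h0 h0' w k = walk x h0 h0' w' k"
  by (induction k) (auto split: prod.splits)

lemma walk_upd:
  "walk x h0 h0' (w(j := v)) (Suc j) = (case walk x h0 h0' w j of (xi, hi, hi') \<Rightarrow>
       (case v of (s, s', t, t', g) \<Rightarrow>
         ((\<lambda>k. xi k + s * hi k + s' * hi' k), (\<lambda>k. t * hi k + t' * hi' k), g)))"
proof -
  have "walk x h0 h0' (w(j := v)) j = walk x h0 h0' w j" by (rule walk_loc) auto
  thus ?thesis by (simp split: prod.splits)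
qed

lemma walk_upd_lt: "k \<le> j \<Longrightarrow> walk x h0 h0' (w(j := v)) k = walk x h0 h0' w k"
  by (rule walk_loc) auto

lemma card_split: "finite A \<Longrightarrow> card {w\<in>A. P w} = card {w\<in>A. P w \<and> Q w} + card {w\<in>A. P w \<and> \<not> Q w}"
  by (subst card_Un_disjoint[symmetric]) (auto intro: arg_cong[where f=card])

lemma BBD:
  fixes f :: "('m::finite \<Rightarrow> 'f::{finite,field}) \<Rightarrow> 'f" and \<delta> \<rho> :: real and H :: "'f set"
  assumes wj: "walk x h0 h0' w j = (xi, hi, hi')"
    and big: "real (Nplane f xi hi hi') \<ge> (\<delta> - 2*\<rho>) * real CARD('f) ^ 2"
    and d34: "\<delta> \<ge> 3/4" and r0: "0 < \<rho>" and r8: "\<rho> \<le> \<delta>/8"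
    and two: "CARD('f) = 2 \<Longrightarrow> CARD('m) = 1 \<and> \<delta> = 1"
  shows "real (card {v \<in> (UNIV \<times> UNIV \<times> UNIV \<times> UNIV \<times> Hvecs H).
      \<not> (2*\<rho>*real CARD('f) \<le> real (Nline f (fst (walk x h0 h0' (w(j := v)) (Suc j))) (fst (snd (walk x h0 h0' (w(j := v)) (Suc j))))))})
    \<le> qf CARD('f) * real (card (UNIV \<times> UNIV \<times> UNIV \<times> UNIV \<times> Hvecs H :: ('f \<times> 'f \<times> 'f \<times> 'f \<times> ('m \<Rightarrow> 'f)) set))"
proof -
  define bad where "bad = {q::('f\<times>'f)\<times>('f\<times>'f). real (Nline f (\<lambda>k. xi k + fst (fst q) * hi k + snd (fst q) * hi' k)
            (\<lambda>k. fst (snd q) * hi k + snd (snd q) * hi' k)) < 2*\<rho>*real CARD('f)}"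
  define \<psi> :: "(('f\<times>'f)\<times>('f\<times>'f)) \<times> ('m \<Rightarrow> 'f) \<Rightarrow> 'f \<times> 'f \<times> 'f \<times> 'f \<times> ('m \<Rightarrow> 'f)"
    where "\<psi> = (\<lambda>(q, g). (fst (fst q), snd (fst q), fst (snd q), snd (snd q), g))"
  have fH: "finite (Hvecs H :: ('m \<Rightarrow> 'f) set)" by simp
  have seteq: "{v \<in> (UNIV \<times> UNIV \<times> UNIV \<times> UNIV \<times> Hvecs H).
      \<not> (2*\<rho>*real CARD('f) \<le> real (Nline f (fst (walk x h0 h0' (w(j := v)) (Suc j))) (fst (snd (walk x h0 h0' (w(j := v)) (Suc j))))))}
     = \<psi> ` (bad \<times> Hvecs H)"
  proof (intro equalityI subsetI)
    fix v assume "v \<in> {v \<in> (UNIV \<times> UNIV \<times> UNIV \<times> UNIV \<times> Hvecs H).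
      \<not> (2*\<rho>*real CARD('f) \<le> real (Nline f (fst (walk x h0 h0' (w(j := v)) (Suc j))) (fst (snd (walk x h0 h0' (w(j := v)) (Suc j))))))}"
    moreover obtain s s' t t' g where v: "v = (s, s', t, t', g)" by (metis prod.exhaust)
    ultimately show "v \<in> \<psi> ` (bad \<times> Hvecs H)"
      unfolding walk_upd wj bad_def \<psi>_def
      by (auto intro!: image_eqI[of _ _ "(((s, s'), (t, t')), g)"])
  next
    fix v assume "v \<in> \<psi> ` (bad \<times> Hvecs H)"
    then obtain s s' t t' g where v: "v = (s, s', t, t', g)" and "((s, s'), (t, t')) \<in> bad" "g \<in> Hvecs H"
      unfolding \<psi>_def by auto
    thus "v \<in> {v \<in> (UNIV \<times> UNIV \<times> UNIV \<times> UNIV \<times> Hvecs H).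
      \<not> (2*\<rho>*real CARD('f) \<le> real (Nline f (fst (walk x h0 h0' (w(j := v)) (Suc j))) (fst (snd (walk x h0 h0' (w(j := v)) (Suc j))))))}"
      unfolding walk_upd wj bad_def by auto
  qed
  have inj: "inj_on \<psi> (bad \<times> Hvecs H)" unfolding \<psi>_def inj_on_def by auto
  have c1: "card (\<psi> ` (bad \<times> Hvecs H)) = card bad * card (Hvecs H :: ('m \<Rightarrow> 'f) set)"
    by (simp add: card_image[OF inj] card_cartesian_product)
  have c2: "card (UNIV \<times> UNIV \<times> UNIV \<times> UNIV \<times> Hvecs H :: ('f \<times> 'f \<times> 'f \<times> 'f \<times> ('m \<Rightarrow> 'f)) set)
      = CARD('f) ^ 4 * card (Hvecs H :: ('m \<Rightarrow> 'f) set)"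
    by (simp add: card_cartesian_product power4_eq_xxxx)
  have L: "real (card bad) \<le> qf CARD('f) * real CARD('f) ^ 4"
    unfolding bad_def by (rule LINE[OF big d34 r0 r8 two])
  show ?thesis unfolding seteq c1 c2
    using mult_right_mono[OF L, of "real (card (Hvecs H :: ('m \<Rightarrow> 'f) set))"] by (simp add: algebra_simps)
qed




theorem mainTheorem6:
  fixes H :: "'f::{finite,field} set"
    and f :: "('m::finite \<Rightarrow> 'f) \<Rightarrow> 'f"
    and x h0 h0' :: "'m \<Rightarrow> 'f"
    and d R :: nat and \<delta> \<rho> :: real
  assumes "is_subfield H"
    and "ext_degree H CARD('m)"
    and "d < CARD('f)"
    and "\<delta> = 1 - real d / real CARD('f)"
    and "\<delta> \<ge> 3 / 4"
    and "0 < \<rho>" and "\<rho> \<le> \<delta> / 8"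
    and "f x \<noteq> 0"
    and "R \<ge> 1"
    and "h0 \<in> Hvecs H" and "h0' \<in> Hvecs H"
    and "distA_set {(0, 0)} (restr_plane f x h0 h0') (RM2 d) < \<rho>"
  shows "walk_prob H R (\<lambda>\<omega>. \<forall>i\<in>{1..R}. eventF f \<delta> \<rho> x h0 h0' \<omega> i)
     \<ge> (1 - 4 / real CARD('f)) ^ R
        - (\<Sum>i = 1..R. walk_prob H R (\<lambda>\<omega>. (\<forall>k\<in>{1..<i}. eventF f \<delta> \<rho> x h0 h0' \<omega> k)
                                           \<and> eventE f \<delta> \<rho> x h0 h0' \<omega> i))"
proof -
  note sub = assms(1) and ext = assms(2) and dl = assms(4) and d34 = assms(5) and r0 = assms(6)
    and r8 = assms(7) and fx = assms(8) and dist = assms(12)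
  define n where "n = real CARD('f)"
  define S where "S = (UNIV \<times> UNIV \<times> UNIV \<times> UNIV \<times> Hvecs H :: ('f \<times> 'f \<times> 'f \<times> 'f \<times> ('m \<Rightarrow> 'f)) set)"
  define Om where "Om = (walk_space H R :: (nat \<Rightarrow> 'f \<times> 'f \<times> 'f \<times> 'f \<times> ('m \<Rightarrow> 'f)) set)"
  have OmS: "Om = {..<R} \<rightarrow>\<^sub>E S" unfolding Om_def walk_space_def S_def ..
  have fS: "finite S" unfolding S_def by simp
  have "(\<lambda>_. 0) \<in> Hvecs H" using sub unfolding Hvecs_def is_subfield_def by simp
  hence Sne: "S \<noteq> {}" unfolding S_def by auto
  have fO: "finite Om" unfolding OmS using fS by (simp add: finite_PiE)
  have Omne: "Om \<noteq> {}" unfolding OmS using Sne by (simp add: PiE_eq_empty_iff)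
  define cnt where "cnt P = real (card {w \<in> Om. P w})" for P
  have wp: "walk_prob H R P = cnt P / real (card Om)" for P
    unfolding walk_prob_def Om_def[symmetric] cnt_def
    by (subst measure_pmf_of_set[OF Omne fO]) (simp add: Int_def)
  have cO: "real (card Om) > 0" using fO Omne by (simp add: card_gt_0_iff)
  define Fv where "Fv w k = eventF f \<delta> \<rho> x h0 h0' w k" for w k
  define Ev where "Ev w k = eventE f \<delta> \<rho> x h0 h0' w k" for w k
  define G where "G i w = (\<forall>k\<in>{1..i}. Fv w k)" for i w
  define Lg where "Lg i w = (2*\<rho>*n \<le> real (Nline f (fst (walk x h0 h0' w i)) (fst (snd (walk x h0 h0' w i)))))" for i w
  define Bg where "Bg i w = (real (Nplane f (fst (walk x h0 h0' w i)) (fst (snd (walk x h0 h0' w i))) (snd (snd (walk x h0 h0' w i))))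
       \<ge> (\<delta> - 2*\<rho>) * n^2)" for i w
  have FvE: "Fv w k = (Lg k w \<and> Bg k w)" for w k
    unfolding Fv_def Lg_def Bg_def eventF_def n_def by (simp split: prod.splits)
  have EvE: "Ev w k = (Lg k w \<and> \<not> Bg k w)" for w k
    unfolding Ev_def Lg_def Bg_def eventE_def n_def by (auto split: prod.splits)
  define qq where "qq = qf CARD('f)"
  have two: "CARD('f) = 2 \<Longrightarrow> CARD('m) = 1 \<and> \<delta> = 1"
  proof
    assume n2: "CARD('f) = 2"
    show "CARD('m) = 1" by (rule m_one[OF sub ext n2])
    have "real d / 2 \<le> 1/4" using d34 dl n2 by simp
    hence "d = 0" by simp
    thus "\<delta> = 1" using dl by simp
  qed
  have "\<delta> \<le> 1" using dl by simp
  hence r18: "\<rho> \<le> 1/8" using r8 by simp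
  have B0: "Bg 0 w" for w
    unfolding Bg_def n_def using P0[OF dist r18 fx dl] by simp
  have step: "cnt (G i) \<ge> (1 - qq) * cnt (G (i - 1)) - cnt (\<lambda>w. G (i - 1) w \<and> Ev w i)"
    if i1: "1 \<le> i" and iR: "i \<le> R" for i
  proof -
    define j where "j = i - 1"
    have ij: "i = Suc j" unfolding j_def using i1 by simp
    have jR: "j < R" using iR ij by simp
    have Gi: "G i w = (G j w \<and> Fv w i)" for w unfolding G_def ij by (auto simp: le_Suc_eq) (metis Suc_le_mono atLeastAtMost_iff le0 order.refl)
    have a: "cnt (G j) = cnt (\<lambda>w. G j w \<and> Lg i w) + cnt (\<lambda>w. G j w \<and> \<not> Lg i w)"
      unfolding cnt_def by (subst card_split[OF fO, of _ "Lg i"]) simp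
    have b: "cnt (\<lambda>w. G j w \<and> Lg i w) = cnt (G i) + cnt (\<lambda>w. G j w \<and> Ev w i)"
    proof -
      have "cnt (\<lambda>w. G j w \<and> Lg i w) = cnt (\<lambda>w. (G j w \<and> Lg i w) \<and> Bg i w) + cnt (\<lambda>w. (G j w \<and> Lg i w) \<and> \<not> Bg i w)"
        unfolding cnt_def by (subst card_split[OF fO, of _ "Bg i"]) simp
      moreover have "cnt (\<lambda>w. (G j w \<and> Lg i w) \<and> Bg i w) = cnt (G i)"
        unfolding cnt_def Gi FvE by (simp add: conj_assoc)
      moreover have "cnt (\<lambda>w. (G j w \<and> Lg i w) \<and> \<not> Bg i w) = cnt (\<lambda>w. G j w \<and> Ev w i)"
        unfolding cnt_def EvE by (simp add: conj_assoc)
      ultimately show ?thesis by simp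
    qed
    have c: "cnt (\<lambda>w. G j w \<and> \<not> Lg i w) \<le> qq * cnt (G j)"
      unfolding cnt_def OmS
    proof (rule COUNT[OF fS jR])
      fix w v assume "w \<in> {..<R} \<rightarrow>\<^sub>E S" "v \<in> S"
      show "G j (w(j := v)) = G j w"
        unfolding G_def FvE Lg_def Bg_def using walk_upd_lt[of _ j x h0 h0' w v] by auto
    next
      fix w assume wO: "w \<in> {..<R} \<rightarrow>\<^sub>E S" and Gj: "G j w"
      obtain xi hi hi' where wj: "walk x h0 h0' w j = (xi, hi, hi')" by (metis prod.exhaust)
      have "Bg j w"
      proof (cases "j = 0")
        case True thus ?thesis using B0 by simp
      next
        case False
        hence "Fv w j" using Gj unfolding G_def by auto
        thus ?thesis unfolding FvE by simp
      qed
      hence big: "real (Nplane f xi hi hi') \<ge> (\<delta> - 2*\<rho>) * real CARD('f) ^ 2"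
        unfolding Bg_def wj n_def by simp
      show "real (card {v \<in> S. \<not> Lg i (w(j := v))}) \<le> qq * real (card S)"
        unfolding S_def qq_def Lg_def ij n_def
        by (rule BBD[OF wj big d34 r0 r8 two])
    qed
    show ?thesis using a b c unfolding j_def[symmetric] by (simp add: algebra_simps)
  qed
  define c where "c = 1 - qq"
  have n2: "CARD('f) \<ge> 2"
  proof -
    have "card {0::'f, 1} \<le> CARD('f)" by (intro card_mono) auto
    thus ?thesis by simp
  qed
  have c0: "0 \<le> c" and c1: "c \<le> 1"
  proof -
    have "16 / (9 * real CARD('f)) \<le> 1" using n2 by (simp add: field_simps)
    moreover have "0 \<le> 16 / (9 * real CARD('f))" by simp
    ultimately show "0 \<le> c" "c \<le> 1" unfolding c_def qq_def qf_def by auto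
  qed
  have cabs: "\<bar>1 - 4 / n\<bar> \<le> c"
  proof (cases "CARD('f) = 2")
    case True thus ?thesis unfolding c_def qq_def qf_def n_def by simp
  next
    case False
    show ?thesis
    proof (cases "CARD('f) = 3")
      case True thus ?thesis unfolding c_def qq_def qf_def n_def by simp
    next
      case False
      hence n4: "real CARD('f) \<ge> 4" using n2 \<open>CARD('f) \<noteq> 2\<close> by linarith
      hence "\<bar>1 - 4 / n\<bar> = 1 - 4 / n" unfolding n_def by (simp add: field_simps)
      also have "\<dots> \<le> 1 - 16 / (9 * n)" using n4 unfolding n_def by (simp add: field_simps)
      finally show ?thesis unfolding c_def qq_def qf_def n_def using \<open>CARD('f) \<noteq> 2\<close> by simp
    qed
  qed
  define e where "e k = cnt (\<lambda>w. G (k - 1) w \<and> Ev w k) / real (card Om)" for k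
  have e0: "e k \<ge> 0" for k unfolding e_def cnt_def by simp
  have ind: "cnt (G i) / real (card Om) \<ge> c ^ i - (\<Sum>k = 1..i. e k)" if "i \<le> R" for i
    using that
  proof (induction i)
    case 0
    have "cnt (G 0) = real (card Om)" unfolding cnt_def G_def by simp
    thus ?case using cO by simp
  next
    case (Suc i)
    have IH: "cnt (G i) / real (card Om) \<ge> c ^ i - (\<Sum>k = 1..i. e k)" using Suc by simp
    have st: "cnt (G (Suc i)) \<ge> c * cnt (G i) - cnt (\<lambda>w. G i w \<and> Ev w (Suc i))"
      using step[of "Suc i"] Suc.prems unfolding c_def by simp
    hence "cnt (G (Suc i)) / real (card Om) \<ge> c * (cnt (G i) / real (card Om)) - e (Suc i)"
    proof -
      have "(c * cnt (G i) - cnt (\<lambda>w. G i w \<and> Ev w (Suc i))) / real (card Om) \<le> cnt (G (Suc i)) / real (card Om)"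
        using st cO by (intro divide_right_mono) auto
      thus ?thesis unfolding e_def by (simp add: diff_divide_distrib)
    qed
    moreover have "c * (cnt (G i) / real (card Om)) \<ge> c * (c ^ i - (\<Sum>k = 1..i. e k))"
      using IH c0 by (rule mult_left_mono)
    moreover have "c * (\<Sum>k = 1..i. e k) \<le> (\<Sum>k = 1..i. e k)"
      using c1 sum_nonneg[of "{1..i}" e] e0 by (metis mult_left_le_one_le c0)
    ultimately show ?case by (simp add: algebra_simps)
  qed
  have lhs: "walk_prob H R (\<lambda>\<omega>. \<forall>i\<in>{1..R}. eventF f \<delta> \<rho> x h0 h0' \<omega> i) = cnt (G R) / real (card Om)"
    unfolding wp G_def Fv_def ..
  have rhs: "walk_prob H R (\<lambda>\<omega>. (\<forall>k\<in>{1..<i}. eventF f \<delta> \<rho> x h0 h0' \<omega> k) \<and> eventE f \<delta> \<rho> x h0 h0' \<omega> i) = e i" for i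
  proof -
    have "{1..<i} = {1..i - 1}" by auto
    thus ?thesis unfolding wp e_def G_def Fv_def Ev_def by simp
  qed
  have "(1 - 4 / n) ^ R \<le> \<bar>1 - 4 / n\<bar> ^ R" by (metis abs_ge_self power_abs)
  also have "\<dots> \<le> c ^ R" using cabs by (intro power_mono) auto
  finally have "(1 - 4 / n) ^ R \<le> c ^ R" .
  thus ?thesis unfolding lhs rhs using ind[of R] unfolding n_def by simp
qed


end
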